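(* Let $\mathbf y_t\in\mathbb{R}^q$ and $\mathbf z_t\in\mathbb{R}^m$, $1\le t\le T$, be observed (mean zero) time series, let $c,k\ge0$ be integers and $h\ge0$. Put $\mathbf x_t=(\mathbf z_t',\dots,\mathbf z_{t-c}')'\in\mathbb{R}^p$, $p=m(c+1)$, and let $\mathcal X_t$ be the $(k+1)\times p$ matrix with rows $\mathbf x_t',\dots,\mathbf x_{t-k}'$. For $\boldsymbol\beta\in\mathbb{R}^p$ and a $q\times(k+1)$ matrix $\boldsymbol\Gamma$ let $\mathbf e_{t+h|t}(\boldsymbol\beta,\boldsymbol\Gamma)=\mathbf y_{t+h}-\boldsymbol\Gamma\mathcal X_t\boldsymbol\beta$ and $$G_2(\boldsymbol\beta,\boldsymbol\Gamma)=\Big|\frac{1}{T-h-c-k}\sum_{t=c+k+1}^{T-h}\mathbf e_{t+h|t}(\boldsymbol\beta,\boldsymbol\Gamma)\mathbf e_{t+h|t}(\boldsymbol\beta,\boldsymbol\Gamma)'\Big|,$$ where $|\cdot|$ denotes the determinant. Let $(\widehat{\boldsymbol\beta},\widehat{\boldsymbol\Gamma})$ minimize $G_2$ and set $$\widehat{\boldsymbol\Sigma}=\frac{1}{T-c-k-h}\sum_{t=c+k+1}^{T-h}(\mathbf y_{t+h}-\widehat{\boldsymbol\Gamma}\mathcal X_t\widehat{\boldsymbol\beta})(\mathbf y_{t+h}-\widehat{\boldsymbol\Gamma}\mathcal X_t\widehat{\boldsymbol\beta})'.$$ Then (whenever the inverses below exist, in particular $|\widehat{\boldsymbol\Sigma}|>0$)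 $$\widehat{\boldsymbol\beta}=\Big[\frac{1}{T-c-k-h}\sum_{t=c+k+1}^{T-h}\mathcal X_t'\widehat{\boldsymbol\Gamma}'\widehat{\boldsymbol\Sigma}^{-1}\widehat{\boldsymbol\Gamma}\mathcal X_t\Big]^{-1}\Big[\frac{1}{T-c-k-h}\sum_{t=c+k+1}^{T-h}\mathcal X_t'\widehat{\boldsymbol\Gamma}'\widehat{\boldsymbol\Sigma}^{-1}\mathbf y_{t+h}\Big]$$ and $\widehat{\boldsymbol\Gamma}=\mathcal G(\widehat{\boldsymbol\beta})$, where $\mathcal G(\boldsymbol\beta)=\mathbf Y'\mathbf F(\boldsymbol\beta)(\mathbf F(\boldsymbol\beta)'\mathbf F(\boldsymbol\beta))^{-1}$.
   Context: $\mathbf f_t(\boldsymbol\beta)=\mathcal X_t\boldsymbol\beta\in\mathbb{R}^{k+1}$. $\mathbf F(\boldsymbol\beta)$ is the $(T-h-c-k)\times(k+1)$ matrix with rows $\mathbf f_t(\boldsymbol\beta)'$, $t=c+k+1,\dots,T-h$, and $\mathbf Y$ is the $(T-h-c-k)\times q$ matrix with corresponding rows $\mathbf y_{t+h}'$; $\mathcal G(\boldsymbol\beta)$ is the least squares coefficient matrix of regressing $\mathbf y_{t+h}$ on $\mathbf f_t(\boldsymbol\beta)$. *)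

theory Defs
  imports "Jordan_Normal_Form.Determinant"
begin

(* Inverse of a square matrix (meaningful when invertible_mat A). *)
definition minv :: "real mat \<Rightarrow> real mat" where
  "minv A = (THE B. inverts_mat A B \<and> inverts_mat B A)"

definition mat_sum :: "nat \<Rightarrow> nat \<Rightarrow> (nat \<Rightarrow> real mat) \<Rightarrow> nat set \<Rightarrow> real mat" where
  "mat_sum n n' f S = mat n n' (\<lambda>(i,j). \<Sum>t\<in>S. f t $$ (i,j))"

definition outer :: "real vec \<Rightarrow> real mat" where
  "outer v = mat (dim_vec v) (dim_vec v) (\<lambda>(i,j). v $ i * v $ j)"

(* x_t = (z_t', ..., z_{t-c}')' in R^{m(c+1)}; entry j*m+i is the i-th entry of z_{t-j} *)
definition xvec :: "(nat \<Rightarrow> real vec) \<Rightarrow> nat \<Rightarrow> nat \<Rightarrow> nat \<Rightarrow> real vec" where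
  "xvec z m c t = vec (m * (c + 1)) (\<lambda>l. z (t - l div m) $ (l mod m))"

definition Xmat :: "(nat \<Rightarrow> real vec) \<Rightarrow> nat \<Rightarrow> nat \<Rightarrow> nat \<Rightarrow> nat \<Rightarrow> real mat" where
  "Xmat z m c k t = mat (k + 1) (m * (c + 1)) (\<lambda>(r,l). xvec z m c (t - r) $ l)"

definition window :: "nat \<Rightarrow> nat \<Rightarrow> nat \<Rightarrow> nat \<Rightarrow> nat set" where
  "window c k h T = {c + k + 1 .. T - h}"

definition nobs :: "nat \<Rightarrow> nat \<Rightarrow> nat \<Rightarrow> nat \<Rightarrow> nat" where
  "nobs c k h T = T - h - c - k"

definition err :: "(nat \<Rightarrow> real vec) \<Rightarrow> (nat \<Rightarrow> real vec) \<Rightarrow> nat \<Rightarrow> nat \<Rightarrow> nat \<Rightarrow> nat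
                    \<Rightarrow> real vec \<Rightarrow> real mat \<Rightarrow> nat \<Rightarrow> real vec" where
  "err y z m c k h \<beta> \<Gamma> t = y (t + h) - \<Gamma> *\<^sub>v (Xmat z m c k t *\<^sub>v \<beta>)"

definition resid_cov :: "(nat \<Rightarrow> real vec) \<Rightarrow> (nat \<Rightarrow> real vec) \<Rightarrow> nat \<Rightarrow> nat \<Rightarrow> nat \<Rightarrow> nat \<Rightarrow> nat \<Rightarrow> nat
                    \<Rightarrow> real vec \<Rightarrow> real mat \<Rightarrow> real mat" where
  "resid_cov y z q m c k h T \<beta> \<Gamma> =
     (1 / real (nobs c k h T)) \<cdot>\<^sub>m
       mat_sum q q (\<lambda>t. outer (err y z m c k h \<beta> \<Gamma> t)) (window c k h T)"

definition G2 :: "(nat \<Rightarrow> real vec) \<Rightarrow> (nat \<Rightarrow> real vec) \<Rightarrow> nat \<Rightarrow> nat \<Rightarrow> nat \<Rightarrow> nat \<Rightarrow> nat \<Rightarrow> nat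
                    \<Rightarrow> real vec \<Rightarrow> real mat \<Rightarrow> real" where
  "G2 y z q m c k h T \<beta> \<Gamma> = det (resid_cov y z q m c k h T \<beta> \<Gamma>)"

(* F(beta): rows f_t(beta)' = (X_t beta)', t = c+k+1..T-h *)
definition Fmat :: "(nat \<Rightarrow> real vec) \<Rightarrow> nat \<Rightarrow> nat \<Rightarrow> nat \<Rightarrow> nat \<Rightarrow> nat \<Rightarrow> real vec \<Rightarrow> real mat" where
  "Fmat z m c k h T \<beta> = mat (nobs c k h T) (k + 1)
      (\<lambda>(r,j). (Xmat z m c k (c + k + 1 + r) *\<^sub>v \<beta>) $ j)"

(* Y: rows y_{t+h}', t = c+k+1..T-h *)
definition Ymat :: "(nat \<Rightarrow> real vec) \<Rightarrow> nat \<Rightarrow> nat \<Rightarrow> nat \<Rightarrow> nat \<Rightarrow> nat \<Rightarrow> real mat" where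
  "Ymat y q c k h T = mat (nobs c k h T) q (\<lambda>(r,i). y (c + k + 1 + r + h) $ i)"

definition Gls :: "(nat \<Rightarrow> real vec) \<Rightarrow> (nat \<Rightarrow> real vec) \<Rightarrow> nat \<Rightarrow> nat \<Rightarrow> nat \<Rightarrow> nat \<Rightarrow> nat \<Rightarrow> nat
                    \<Rightarrow> real vec \<Rightarrow> real mat" where
  "Gls y z q m c k h T \<beta> =
     transpose_mat (Ymat y q c k h T) * Fmat z m c k h T \<beta>
       * minv (transpose_mat (Fmat z m c k h T \<beta>) * Fmat z m c k h T \<beta>)"

end

theory Submission
  imports Defs Complex_Main
begin

lemma minv_eq:
  assumes A: "A \<in> carrier_mat n n" and B: "B \<in> carrier_mat n n"
    and AB: "A * B = 1\<^sub>m n" and BA: "B * A = 1\<^sub>m n"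
  shows "minv A = B"
  unfolding minv_def
proof (rule the_equality)
  show "inverts_mat A B \<and> inverts_mat B A"
    using A B AB BA by (auto simp: inverts_mat_def)
next
  fix B' assume "inverts_mat A B' \<and> inverts_mat B' A"
  hence 1: "A * B' = 1\<^sub>m n" and 2: "B' * A = 1\<^sub>m (dim_row B')"
    using A by (auto simp: inverts_mat_def)
  have "dim_col B' = n" using arg_cong[OF 1, of dim_col] by simp
  moreover have "dim_row B' = n" using arg_cong[OF 2, of dim_col] A by simp
  ultimately have B': "B' \<in> carrier_mat n n" by auto
  with 2 have 2: "B' * A = 1\<^sub>m n" by simp
  have "B' = B' * (A * B)" using AB B' by simp
  also have "\<dots> = (B' * A) * B" using A B B' by (simp add: assoc_mult_mat)
  also have "\<dots> = B" using 2 B by simp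
  finally show "B' = B" .
qed

lemma minv_det:
  assumes A: "A \<in> carrier_mat n n" and d: "det A \<noteq> 0"
  shows "minv A \<in> carrier_mat n n \<and> A * minv A = 1\<^sub>m n \<and> minv A * A = 1\<^sub>m n"
proof -
  have "A \<in> Units (ring_mat TYPE(real) n n)" by (rule det_non_zero_imp_unit[OF A d])
  then obtain B where B: "B \<in> carrier_mat n n" "A * B = 1\<^sub>m n" "B * A = 1\<^sub>m n"
    unfolding Units_def ring_mat_def by auto
  with minv_eq[OF A B(1) B(2) B(3)] show ?thesis by simp
qed

lemma minv_inv:
  assumes A: "A \<in> carrier_mat n n" and i: "invertible_mat A"
  shows "minv A \<in> carrier_mat n n \<and> A * minv A = 1\<^sub>m n \<and> minv A * A = 1\<^sub>m n"
proof -
  from i obtain B where 1: "A * B = 1\<^sub>m n" and 2: "B * A = 1\<^sub>m (dim_row B)"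
    using A unfolding invertible_mat_def inverts_mat_def by auto
  have "dim_col B = n" using arg_cong[OF 1, of dim_col] by simp
  moreover have "dim_row B = n" using arg_cong[OF 2, of dim_col] A by simp
  ultimately have B: "B \<in> carrier_mat n n" by auto
  with 2 have 2: "B * A = 1\<^sub>m n" by simp
  with minv_eq[OF A B 1 2] B 1 show ?thesis by simp
qed

lemma deriv_det_id:
  assumes B: "B \<in> carrier_mat n n" and C: "C \<in> carrier_mat n n"
  shows "((\<lambda>s. det (1\<^sub>m n + s \<cdot>\<^sub>m B + s^2 \<cdot>\<^sub>m C)) has_real_derivative (\<Sum>i<n. B $$ (i,i))) (at 0)"
proof -
  define m where "m = (\<lambda>i j (s::real). (if i = j then 1 else 0) + s * B $$ (i,j) + s^2 * C $$ (i,j))"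
  define P where "P = {p. p permutes {0..<n}}"
  have eq: "(\<lambda>s. det (1\<^sub>m n + s \<cdot>\<^sub>m B + s^2 \<cdot>\<^sub>m C)) =
     (\<lambda>s. \<Sum>p\<in>P. signof p * (\<Prod>i\<in>{0..<n}. m i (p i) s))"
  proof
    fix s
    show "det (1\<^sub>m n + s \<cdot>\<^sub>m B + s^2 \<cdot>\<^sub>m C) = (\<Sum>p\<in>P. signof p * (\<Prod>i\<in>{0..<n}. m i (p i) s))"
      unfolding det_def P_def using B C
      by (auto intro!: sum.cong prod.cong simp: m_def permutes_def)
  qed
  have d: "((\<lambda>s. \<Sum>p\<in>P. signof p * (\<Prod>i\<in>{0..<n}. m i (p i) s)) has_real_derivative
      (\<Sum>p\<in>P. signof p * (\<Sum>i\<in>{0..<n}. (B $$ (i, p i) + 2 * 0 * C $$ (i, p i))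
          * (\<Prod>j\<in>{0..<n} - {i}. m j (p j) 0)))) (at 0)"
  proof (intro DERIV_sum DERIV_cmult)
    fix p
    show "((\<lambda>s. \<Prod>i\<in>{0..<n}. m i (p i) s) has_real_derivative
      (\<Sum>i\<in>{0..<n}. (B $$ (i, p i) + 2 * 0 * C $$ (i, p i))
          * (\<Prod>j\<in>{0..<n} - {i}. m j (p j) 0))) (at 0)"
    proof (rule has_field_derivative_prod)
      fix i
      show "(m i (p i) has_real_derivative B $$ (i, p i) + 2 * 0 * C $$ (i, p i)) (at 0)"
        unfolding m_def by (auto intro!: derivative_eq_intros)
    qed
  qed
  have "(\<Sum>p\<in>P. signof p * (\<Sum>i\<in>{0..<n}. (B $$ (i, p i) + 2 * 0 * C $$ (i, p i))
          * (\<Prod>j\<in>{0..<n} - {i}. m j (p j) 0))) = (\<Sum>i<n. B $$ (i,i))"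
    (is "(\<Sum>p\<in>P. ?t p) = _")
  proof -
    have idP: "id \<in> P" unfolding P_def by (simp add: permutes_id)
    have finP: "finite P" unfolding P_def by (simp add: finite_permutations)
    have z: "?t p = 0" if pP: "p \<in> P" and pid: "p \<noteq> id" for p
    proof -
      have perm: "p permutes {0..<n}" using pP P_def by auto
      have "(\<Prod>j\<in>{0..<n} - {i}. m j (p j) 0) = 0" if i: "i \<in> {0..<n}" for i
      proof -
        obtain x where x: "p x \<noteq> x" using pid by (metis eq_id_iff)
        have xI: "x \<in> {0..<n}" using perm x unfolding permutes_def by metis
        have "\<exists>j\<in>{0..<n} - {i}. p j \<noteq> j"
        proof (cases "x = i")
          case False thus ?thesis using x xI by auto
        next
          case True
          let ?k = "p i"
          have kI: "?k \<in> {0..<n}" using perm i by (simp add: permutes_in_image)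
          have ki: "?k \<noteq> i" using x True by simp
          have "p ?k \<noteq> ?k"
          proof
            assume "p ?k = ?k"
            hence "p ?k = p i" by simp
            hence "?k = i" using permutes_inj[OF perm] by (meson injD)
            with ki show False by simp
          qed
          thus ?thesis using kI ki by auto
        qed
        then obtain j where j: "j \<in> {0..<n} - {i}" "p j \<noteq> j" by blast
        have "m j (p j) 0 = 0" using j(2) unfolding m_def by auto
        thus ?thesis using j(1) by (meson finite_Diff finite_atLeastLessThan prod_zero)
      qed
      hence "(\<Sum>i\<in>{0..<n}. (B $$ (i, p i) + 2 * 0 * C $$ (i, p i))
          * (\<Prod>j\<in>{0..<n} - {i}. m j (p j) 0)) = 0"
        by (intro sum.neutral ballI) simp
      thus ?thesis by simp
    qed
    have "(\<Sum>p\<in>P. ?t p) = ?t id + (\<Sum>p\<in>P - {id}. ?t p)"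
      using finP idP by (simp add: sum.remove)
    also have "(\<Sum>p\<in>P - {id}. ?t p) = 0" using z by (intro sum.neutral) auto
    also have "?t id = (\<Sum>i<n. B $$ (i,i))"
      by (auto simp: m_def sign_id atLeast0LessThan intro!: sum.cong prod.neutral)
    finally show ?thesis by simp
  qed
  with d eq show ?thesis by simp
qed


lemma det_min_trace:
  assumes A: "A \<in> carrier_mat n n" and dA: "det A > 0"
    and B: "B \<in> carrier_mat n n" and C: "C \<in> carrier_mat n n"
    and min: "\<And>s. det A \<le> det (A + s \<cdot>\<^sub>m B + s^2 \<cdot>\<^sub>m C)"
  shows "(\<Sum>i<n. (minv A * B) $$ (i,i)) = 0"
proof -
  define W where "W = minv A"
  have W: "W \<in> carrier_mat n n" "A * W = 1\<^sub>m n" "W * A = 1\<^sub>m n"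
    using minv_det[OF A] dA unfolding W_def by auto
  have WB: "W * B \<in> carrier_mat n n" and WC: "W * C \<in> carrier_mat n n" using W B C by auto
  have fact: "A + s \<cdot>\<^sub>m B + s^2 \<cdot>\<^sub>m C = A * (1\<^sub>m n + s \<cdot>\<^sub>m (W * B) + s^2 \<cdot>\<^sub>m (W * C))" for s
  proof -
    have "A * (1\<^sub>m n + s \<cdot>\<^sub>m (W * B) + s^2 \<cdot>\<^sub>m (W * C))
        = A * 1\<^sub>m n + A * (s \<cdot>\<^sub>m (W * B)) + A * (s^2 \<cdot>\<^sub>m (W * C))"
      using A WB WC
      by (simp add: mult_add_distrib_mat[of A n n _ n] del: right_mult_one_mat)
    also have "\<dots> = A + s \<cdot>\<^sub>m B + s^2 \<cdot>\<^sub>m C"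
    proof -
      have e: "A * (t \<cdot>\<^sub>m (W * D)) = t \<cdot>\<^sub>m D" if D: "D \<in> carrier_mat n n" for t D
      proof -
        have "A * (t \<cdot>\<^sub>m (W * D)) = t \<cdot>\<^sub>m (A * (W * D))"
          using A W D by (intro mult_smult_distrib) auto
        also have "A * (W * D) = (A * W) * D" using A W(1) D by (simp add: assoc_mult_mat)
        finally show ?thesis using W D by simp
      qed
      show ?thesis using e[OF B, of s] e[OF C, of "s^2"] A by simp
    qed
    finally show ?thesis by simp
  qed
  define h where "h = (\<lambda>s::real. det (1\<^sub>m n + s \<cdot>\<^sub>m (W * B) + s^2 \<cdot>\<^sub>m (W * C)))"
  have hd: "det (A + s \<cdot>\<^sub>m B + s^2 \<cdot>\<^sub>m C) = det A * h s" for s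
    unfolding fact h_def using A WB WC by (subst det_mult[of _ n]) auto
  have "1\<^sub>m n + 0 \<cdot>\<^sub>m (W * B) + 0 \<cdot>\<^sub>m (W * C) = (1\<^sub>m n :: real mat)"
    by (rule eq_matI) (use W B C in auto)
  hence h0: "h 0 = 1" unfolding h_def by simp
  have hmin: "h 0 \<le> h s" for s
  proof -
    have "det A * 1 \<le> det A * h s" using min[of s] hd[of s] by simp
    thus ?thesis using dA h0 by (simp add: mult_le_cancel_left)
  qed
  have "(h has_real_derivative (\<Sum>i<n. (W * B) $$ (i,i))) (at 0)"
    unfolding h_def by (rule deriv_det_id[OF WB WC])
  from DERIV_local_min[OF this, of 1] hmin show ?thesis unfolding W_def by auto
qed


lemma minv_sym:
  assumes A: "A \<in> carrier_mat n n" and dA: "det A \<noteq> 0" and sym: "transpose_mat A = A"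
  shows "transpose_mat (minv A) = minv A"
proof -
  define W where "W = minv A"
  have W: "W \<in> carrier_mat n n" "A * W = 1\<^sub>m n" "W * A = 1\<^sub>m n"
    using minv_det[OF A dA] unfolding W_def by auto
  have 1: "A * transpose_mat W = 1\<^sub>m n"
  proof -
    have "A * transpose_mat W = transpose_mat A * transpose_mat W" using sym by simp
    also have "\<dots> = transpose_mat (W * A)" using transpose_mult[OF W(1) A] by simp
    finally show ?thesis using W by simp
  qed
  have 2: "transpose_mat W * A = 1\<^sub>m n"
  proof -
    have "transpose_mat W * A = transpose_mat W * transpose_mat A" using sym by simp
    also have "\<dots> = transpose_mat (A * W)" using transpose_mult[OF A W(1)] by simp
    finally show ?thesis using W by simp
  qed
  have "minv A = transpose_mat W" using minv_eq[OF A _ 1 2] W by simp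
  thus ?thesis unfolding W_def by simp
qed

lemma resid_first_order:
  fixes e u :: "nat \<Rightarrow> real vec" and S :: "nat set" and a :: real
  assumes S: "finite S" and a: "a \<noteq> 0"
    and e: "\<And>t. t \<in> S \<Longrightarrow> e t \<in> carrier_vec q"
    and u: "\<And>t. t \<in> S \<Longrightarrow> u t \<in> carrier_vec q"
    and pos: "det (a \<cdot>\<^sub>m mat_sum q q (\<lambda>t. outer (e t)) S) > 0"
    and min: "\<And>s. det (a \<cdot>\<^sub>m mat_sum q q (\<lambda>t. outer (e t)) S)
                  \<le> det (a \<cdot>\<^sub>m mat_sum q q (\<lambda>t. outer (e t - s \<cdot>\<^sub>v u t)) S)"
  shows "(\<Sum>t\<in>S. u t \<bullet> (minv (a \<cdot>\<^sub>m mat_sum q q (\<lambda>t. outer (e t)) S) *\<^sub>v e t)) = 0"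
proof -
  define A where "A = a \<cdot>\<^sub>m mat_sum q q (\<lambda>t. outer (e t)) S"
  have ed[simp]: "dim_vec (e t) = q" and ud[simp]: "dim_vec (u t) = q" if "t \<in> S" for t
    using e[OF that] u[OF that] by auto
  define B where "B = mat q q (\<lambda>(i,j). - a * (\<Sum>t\<in>S. e t $ i * u t $ j + u t $ i * e t $ j))"
  define C where "C = mat q q (\<lambda>(i,j). a * (\<Sum>t\<in>S. u t $ i * u t $ j))"
  have A: "A \<in> carrier_mat q q" unfolding A_def mat_sum_def by simp
  have Aij: "A $$ (i,j) = a * (\<Sum>t\<in>S. e t $ i * e t $ j)" if "i < q" "j < q" for i j
    unfolding A_def mat_sum_def outer_def using that e by (auto intro!: sum.cong)
  have B: "B \<in> carrier_mat q q" and C: "C \<in> carrier_mat q q" unfolding B_def C_def by auto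
  have expand: "a \<cdot>\<^sub>m mat_sum q q (\<lambda>t. outer (e t - s \<cdot>\<^sub>v u t)) S = A + s \<cdot>\<^sub>m B + s^2 \<cdot>\<^sub>m C" for s
  proof (rule eq_matI)
    fix i j assume ij: "i < dim_row (A + s \<cdot>\<^sub>m B + s^2 \<cdot>\<^sub>m C)" "j < dim_col (A + s \<cdot>\<^sub>m B + s^2 \<cdot>\<^sub>m C)"
    hence i: "i < q" and j: "j < q" using A B C by auto
    have "(a \<cdot>\<^sub>m mat_sum q q (\<lambda>t. outer (e t - s \<cdot>\<^sub>v u t)) S) $$ (i,j)
       = a * (\<Sum>t\<in>S. (e t $ i - s * u t $ i) * (e t $ j - s * u t $ j))"
      unfolding mat_sum_def outer_def using i j e u by (auto intro!: sum.cong)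
    also have "\<dots> = a * (\<Sum>t\<in>S. e t $ i * e t $ j) + s * (- a * (\<Sum>t\<in>S. e t $ i * u t $ j + u t $ i * e t $ j))
        + s^2 * (a * (\<Sum>t\<in>S. u t $ i * u t $ j))"
      by (simp add: algebra_simps power2_eq_square sum.distrib sum_distrib_left sum_subtractf sum_negf)
    also have "\<dots> = (A + s \<cdot>\<^sub>m B + s^2 \<cdot>\<^sub>m C) $$ (i,j)"
      using i j A B C Aij by (simp add: B_def C_def)
    finally show "(a \<cdot>\<^sub>m mat_sum q q (\<lambda>t. outer (e t - s \<cdot>\<^sub>v u t)) S) $$ (i,j) = (A + s \<cdot>\<^sub>m B + s^2 \<cdot>\<^sub>m C) $$ (i,j)" .
  qed (use A B C in \<open>auto simp: mat_sum_def\<close>)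
  have tr: "(\<Sum>i<q. (minv A * B) $$ (i,i)) = 0"
    by (rule det_min_trace[OF A _ B C]) (use pos min expand in \<open>auto simp: A_def\<close>)
  define W where "W = minv A"
  have posA: "det A > 0" using pos unfolding A_def .
  have W: "W \<in> carrier_mat q q" using minv_det[OF A] posA unfolding W_def by auto
  have symA: "transpose_mat A = A"
    by (rule eq_matI) (use A Aij in \<open>auto simp: mult.commute\<close>)
  have symW: "W $$ (i,j) = W $$ (j,i)" if "i < q" "j < q" for i j
  proof -
    have "transpose_mat W = W" using minv_sym[OF A _ symA] posA unfolding W_def by auto
    hence "transpose_mat W $$ (j,i) = W $$ (j,i)" by simp
    thus ?thesis using that W by auto
  qed
  define X1 where "X1 = (\<Sum>i<q. \<Sum>j<q. W $$ (i,j) * (\<Sum>t\<in>S. e t $ j * u t $ i))"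
  define X2 where "X2 = (\<Sum>i<q. \<Sum>j<q. W $$ (i,j) * (\<Sum>t\<in>S. u t $ j * e t $ i))"
  have "(\<Sum>i<q. (W * B) $$ (i,i)) = - a * (X1 + X2)"
  proof -
    have "(\<Sum>i<q. (W * B) $$ (i,i)) = (\<Sum>i<q. \<Sum>j<q. W $$ (i,j) * B $$ (j,i))"
      using W B by (auto simp: scalar_prod_def atLeast0LessThan intro!: sum.cong)
    also have "\<dots> = (\<Sum>i<q. \<Sum>j<q. - a * (W $$ (i,j) * (\<Sum>t\<in>S. e t $ j * u t $ i) +
                                              W $$ (i,j) * (\<Sum>t\<in>S. u t $ j * e t $ i)))"
      by (auto simp: B_def algebra_simps sum.distrib intro!: sum.cong)
    also have "\<dots> = - a * (X1 + X2)"
      by (simp add: X1_def X2_def sum_distrib_left sum.distrib sum_negf ring_distribs sum_subtractf)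
    finally show ?thesis .
  qed
  with tr a have X: "X1 + X2 = 0" unfolding W_def by simp
  have "X2 = (\<Sum>i<q. \<Sum>j<q. W $$ (j,i) * (\<Sum>t\<in>S. u t $ j * e t $ i))"
    unfolding X2_def using symW by (auto intro!: sum.cong)
  also have "\<dots> = X1" unfolding X1_def by (subst sum.swap) (auto intro!: sum.cong simp: mult.commute)
  finally have "X1 = 0" using X by simp
  moreover have "(\<Sum>t\<in>S. u t \<bullet> (W *\<^sub>v e t)) = X1"
  proof -
    have "(\<Sum>t\<in>S. u t \<bullet> (W *\<^sub>v e t)) = (\<Sum>t\<in>S. \<Sum>i<q. u t $ i * (\<Sum>j<q. W $$ (i,j) * e t $ j))"
      using W e u by (auto simp: scalar_prod_def atLeast0LessThan intro!: sum.cong)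
    also have "\<dots> = X1" unfolding X1_def
      by (simp add: sum_distrib_left sum_distrib_right algebra_simps sum.swap[of _ S])
    finally show ?thesis .
  qed
  ultimately show ?thesis unfolding W_def A_def by simp
qed


lemma mat_sum_cong:
  "(\<And>t. t \<in> S \<Longrightarrow> f t = g t) \<Longrightarrow> mat_sum n n' f S = mat_sum n n' g S"
  unfolding mat_sum_def by (auto intro!: eq_matI sum.cong)

lemma self_scalar_zero:
  fixes v :: "real vec"
  assumes v: "v \<in> carrier_vec p" and z: "v \<bullet> v = 0"
  shows "v = 0\<^sub>v p"
proof -
  have "(\<Sum>l\<in>{0..<p}. v $ l * v $ l) = 0" using v z by (simp add: scalar_prod_def)
  hence "\<forall>l\<in>{0..<p}. v $ l * v $ l = 0" by (subst (asm) sum_nonneg_eq_0_iff) auto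
  thus ?thesis using v by (intro eq_vecI) auto
qed

theorem theorem4:
  fixes y z :: "nat \<Rightarrow> real vec" and q m c k h T :: nat
    and \<beta>h :: "real vec" and \<Gamma>h :: "real mat"
  assumes y_dim: "\<forall>t\<in>{1..T}. y t \<in> carrier_vec q"
    and z_dim: "\<forall>t\<in>{1..T}. z t \<in> carrier_vec m"
    and T_big: "h + c + k < T"
    and \<beta>h_dim: "\<beta>h \<in> carrier_vec (m * (c + 1))"
    and \<Gamma>h_dim: "\<Gamma>h \<in> carrier_mat q (k + 1)"
    and minimizer: "\<forall>\<beta>\<in>carrier_vec (m * (c + 1)). \<forall>\<Gamma>\<in>carrier_mat q (k + 1).
                      G2 y z q m c k h T \<beta>h \<Gamma>h \<le> G2 y z q m c k h T \<beta> \<Gamma>"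
    and Sigma_pos: "det (resid_cov y z q m c k h T \<beta>h \<Gamma>h) > 0"
    and A_inv: "invertible_mat
        ((1 / real (nobs c k h T)) \<cdot>\<^sub>m
          mat_sum (m * (c + 1)) (m * (c + 1))
            (\<lambda>t. transpose_mat (Xmat z m c k t) * transpose_mat \<Gamma>h
                 * minv (resid_cov y z q m c k h T \<beta>h \<Gamma>h) * \<Gamma>h * Xmat z m c k t)
            (window c k h T))"
    and FF_inv: "invertible_mat
        (transpose_mat (Fmat z m c k h T \<beta>h) * Fmat z m c k h T \<beta>h)"
  shows "\<beta>h =
           minv ((1 / real (nobs c k h T)) \<cdot>\<^sub>m
             mat_sum (m * (c + 1)) (m * (c + 1))
               (\<lambda>t. transpose_mat (Xmat z m c k t) * transpose_mat \<Gamma>h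
                    * minv (resid_cov y z q m c k h T \<beta>h \<Gamma>h) * \<Gamma>h * Xmat z m c k t)
               (window c k h T))
           *\<^sub>v ((1 / real (nobs c k h T)) \<cdot>\<^sub>v
                 finsum_vec TYPE(real) (m * (c + 1))
                   (\<lambda>t. transpose_mat (Xmat z m c k t) * transpose_mat \<Gamma>h
                        * minv (resid_cov y z q m c k h T \<beta>h \<Gamma>h) *\<^sub>v y (t + h))
                   (window c k h T))
         \<and> \<Gamma>h = Gls y z q m c k h T \<beta>h"
  proof -
  define p where "p = m * (c + 1)"
  define S where "S = window c k h T"
  define n where "n = nobs c k h T"
  define a where "a = 1 / real n"
  define X where "X = Xmat z m c k"
  define e where "e = err y z m c k h \<beta>h \<Gamma>h"
  define Sig where "Sig = resid_cov y z q m c k h T \<beta>h \<Gamma>h"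
  define W where "W = minv Sig"
  have n_pos: "n > 0" unfolding n_def nobs_def using T_big by simp
  have a0: "a \<noteq> 0" unfolding a_def using n_pos by simp
  have S_fin: "finite S" unfolding S_def window_def by simp
  have X: "X t \<in> carrier_mat (k+1) p" for t unfolding X_def Xmat_def p_def by simp
  have ycar: "y (t + h) \<in> carrier_vec q" if "t \<in> S" for t
    using that y_dim T_big unfolding S_def window_def by auto
  have e_def': "e t = y (t + h) - \<Gamma>h *\<^sub>v (X t *\<^sub>v \<beta>h)" for t
    unfolding e_def err_def X_def ..
  have ecar: "e t \<in> carrier_vec q" if "t \<in> S" for t
    unfolding e_def' using ycar[OF that] \<Gamma>h_dim X \<beta>h_dim unfolding p_def
    by (meson minus_carrier_vec mult_mat_vec_carrier)
  have Sig_def': "Sig = a \<cdot>\<^sub>m mat_sum q q (\<lambda>t. outer (e t)) S"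
    unfolding Sig_def resid_cov_def a_def n_def S_def e_def ..
  have SigC: "Sig \<in> carrier_mat q q" unfolding Sig_def' mat_sum_def by simp
  have Sig_pos: "det Sig > 0" using Sigma_pos unfolding Sig_def .
  have Winv: "W \<in> carrier_mat q q" "Sig * W = 1\<^sub>m q" "W * Sig = 1\<^sub>m q"
    using minv_det[OF SigC] Sig_pos unfolding W_def by auto
  have G2_eq: "G2 y z q m c k h T \<beta> \<Gamma> = det (a \<cdot>\<^sub>m mat_sum q q (\<lambda>t. outer (err y z m c k h \<beta> \<Gamma> t)) S)" for \<beta> \<Gamma>
    unfolding G2_def resid_cov_def a_def n_def S_def ..
  have FO: "(\<Sum>t\<in>S. u t \<bullet> (W *\<^sub>v e t)) = 0"
    if ucar: "\<And>t. t \<in> S \<Longrightarrow> u t \<in> carrier_vec q"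
    and pert: "\<And>s. \<exists>\<beta>\<in>carrier_vec p. \<exists>\<Gamma>\<in>carrier_mat q (k + 1).
                 \<forall>t\<in>S. err y z m c k h \<beta> \<Gamma> t = e t - s \<cdot>\<^sub>v u t" for u
  proof -
    have "(\<Sum>t\<in>S. u t \<bullet> (minv (a \<cdot>\<^sub>m mat_sum q q (\<lambda>t. outer (e t)) S) *\<^sub>v e t)) = 0"
    proof (rule resid_first_order[OF S_fin a0 ecar ucar])
      show "det (a \<cdot>\<^sub>m mat_sum q q (\<lambda>t. outer (e t)) S) > 0" using Sig_pos Sig_def' by simp
      fix s
      obtain \<beta> \<Gamma> where b: "\<beta> \<in> carrier_vec p" and g: "\<Gamma> \<in> carrier_mat q (k + 1)"
        and eq: "\<forall>t\<in>S. err y z m c k h \<beta> \<Gamma> t = e t - s \<cdot>\<^sub>v u t" using pert[of s] by blast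
      have "G2 y z q m c k h T \<beta>h \<Gamma>h \<le> G2 y z q m c k h T \<beta> \<Gamma>"
        using minimizer b g unfolding p_def by blast
      thus "det (a \<cdot>\<^sub>m mat_sum q q (\<lambda>t. outer (e t)) S)
                  \<le> det (a \<cdot>\<^sub>m mat_sum q q (\<lambda>t. outer (e t - s \<cdot>\<^sub>v u t)) S)"
        unfolding G2_eq e_def[symmetric] using mat_sum_cong[of S "\<lambda>t. outer (err y z m c k h \<beta> \<Gamma> t)"] eq
        by auto
    qed (auto)
    thus ?thesis unfolding W_def Sig_def' .
  qed
  define f where "f t = X t *\<^sub>v \<beta>h" for t
  have fcar: "f t \<in> carrier_vec (k+1)" for t unfolding f_def using X[of t] \<beta>h_dim unfolding p_def
    by (meson mult_mat_vec_carrier)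
  define w where "w t = W *\<^sub>v e t" for t
  have wcar: "w t \<in> carrier_vec q" for t unfolding w_def using Winv(1) by (metis carrier_matD(1) carrier_vec_dim_vec dim_mult_mat_vec)
  have mv: "(A *\<^sub>v v) $ i = (\<Sum>j<nc. A $$ (i,j) * v $ j)"
    if "A \<in> carrier_mat nr nc" "v \<in> carrier_vec nc" "i < nr" for A :: "real mat" and v nr nc i
    using that by (auto simp: scalar_prod_def atLeast0LessThan intro!: sum.cong)
  have sp: "v \<bullet> v' = (\<Sum>i<nr. v $ i * v' $ i)"
    if "v \<in> carrier_vec nr" "v' \<in> carrier_vec nr" for v v' :: "real vec" and nr
    using that by (auto simp: scalar_prod_def atLeast0LessThan)
  define E where "E = mat q (k+1) (\<lambda>(i,j). \<Sum>t\<in>S. w t $ i * f t $ j)"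
  have ECar: "E \<in> carrier_mat q (k+1)" unfolding E_def by simp
  have FOG: "(\<Sum>i<q. \<Sum>j<k+1. \<Delta> $$ (i,j) * E $$ (i,j)) = 0" if D: "\<Delta> \<in> carrier_mat q (k+1)" for \<Delta>
  proof -
    have "(\<Sum>t\<in>S. (\<Delta> *\<^sub>v f t) \<bullet> w t) = 0"
      unfolding w_def
    proof (rule FO)
      show "\<Delta> *\<^sub>v f t \<in> carrier_vec q" for t using D fcar by auto
      fix s
      show "\<exists>\<beta>\<in>carrier_vec p. \<exists>\<Gamma>\<in>carrier_mat q (k + 1).
                 \<forall>t\<in>S. err y z m c k h \<beta> \<Gamma> t = e t - s \<cdot>\<^sub>v (\<Delta> *\<^sub>v f t)"
      proof (intro bexI ballI)
        fix t assume t: "t \<in> S"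
        show "err y z m c k h \<beta>h (\<Gamma>h + s \<cdot>\<^sub>m \<Delta>) t = e t - s \<cdot>\<^sub>v (\<Delta> *\<^sub>v f t)"
        proof (rule eq_vecI)
          fix i assume "i < dim_vec (e t - s \<cdot>\<^sub>v (\<Delta> *\<^sub>v f t))"
          hence i: "i < q" using D by simp
          have "(err y z m c k h \<beta>h (\<Gamma>h + s \<cdot>\<^sub>m \<Delta>) t) $ i
              = y (t + h) $ i - ((\<Gamma>h + s \<cdot>\<^sub>m \<Delta>) *\<^sub>v f t) $ i"
            unfolding err_def f_def X_def using i \<Gamma>h_dim D by simp
          also have "((\<Gamma>h + s \<cdot>\<^sub>m \<Delta>) *\<^sub>v f t) $ i = (\<Gamma>h *\<^sub>v f t) $ i + s * (\<Delta> *\<^sub>v f t) $ i"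
            using i \<Gamma>h_dim D fcar[of t]
            by (simp add: mv[of _ q "k+1"] sum.distrib sum_distrib_left algebra_simps)
          also have "(e t - s \<cdot>\<^sub>v (\<Delta> *\<^sub>v f t)) $ i = e t $ i - s * (\<Delta> *\<^sub>v f t) $ i"
            using i D by simp
          moreover have "e t $ i = y (t + h) $ i - (\<Gamma>h *\<^sub>v f t) $ i"
            unfolding e_def' f_def using i \<Gamma>h_dim by simp
          ultimately show "(err y z m c k h \<beta>h (\<Gamma>h + s \<cdot>\<^sub>m \<Delta>) t) $ i = (e t - s \<cdot>\<^sub>v (\<Delta> *\<^sub>v f t)) $ i"
            by simp
        qed (use D \<Gamma>h_dim in \<open>simp add: err_def\<close>)
      qed (use \<beta>h_dim D \<Gamma>h_dim in \<open>simp_all add: p_def\<close>)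
    qed
    moreover have "(\<Sum>t\<in>S. (\<Delta> *\<^sub>v f t) \<bullet> w t) = (\<Sum>i<q. \<Sum>j<k+1. \<Delta> $$ (i,j) * E $$ (i,j))"
    proof -
      have "(\<Sum>t\<in>S. (\<Delta> *\<^sub>v f t) \<bullet> w t) = (\<Sum>t\<in>S. \<Sum>i<q. (\<Sum>j<k+1. \<Delta> $$ (i,j) * f t $ j) * w t $ i)"
      proof (rule sum.cong[OF refl])
        fix t assume "t \<in> S"
        have Df: "\<Delta> *\<^sub>v f t \<in> carrier_vec q" using D fcar[of t] by (meson mult_mat_vec_carrier)
        have "(\<Delta> *\<^sub>v f t) \<bullet> w t = (\<Sum>i<q. (\<Delta> *\<^sub>v f t) $ i * w t $ i)"
          by (rule sp[OF Df wcar])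
        also have "\<dots> = (\<Sum>i<q. (\<Sum>j<k+1. \<Delta> $$ (i,j) * f t $ j) * w t $ i)"
          by (rule sum.cong[OF refl]) (simp add: mv[OF D fcar])
        finally show "(\<Delta> *\<^sub>v f t) \<bullet> w t = (\<Sum>i<q. (\<Sum>j<k+1. \<Delta> $$ (i,j) * f t $ j) * w t $ i)" .
      qed
      also have "\<dots> = (\<Sum>t\<in>S. \<Sum>i<q. \<Sum>j<k+1. \<Delta> $$ (i,j) * (w t $ i * f t $ j))"
        by (intro sum.cong refl, subst sum_distrib_right, intro sum.cong refl) (simp add: ac_simps)
      also have "\<dots> = (\<Sum>i<q. \<Sum>t\<in>S. \<Sum>j<k+1. \<Delta> $$ (i,j) * (w t $ i * f t $ j))"
        by (rule sum.swap)
      also have "\<dots> = (\<Sum>i<q. \<Sum>j<k+1. \<Sum>t\<in>S. \<Delta> $$ (i,j) * (w t $ i * f t $ j))"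
        by (rule sum.cong[OF refl], rule sum.swap)
      also have "\<dots> = (\<Sum>i<q. \<Sum>j<k+1. \<Delta> $$ (i,j) * (\<Sum>t\<in>S. w t $ i * f t $ j))"
        by (simp add: sum_distrib_left)
      also have "\<dots> = (\<Sum>i<q. \<Sum>j<k+1. \<Delta> $$ (i,j) * E $$ (i,j))"
        unfolding E_def by (auto intro!: sum.cong)
      finally show ?thesis .
    qed
    ultimately show ?thesis by simp
  qed
  have Ez: "E $$ (i,j) = 0" if ij: "i < q" "j < k+1" for i j
  proof -
    have "(\<Sum>i<q. \<Sum>j<k+1. E $$ (i,j) * E $$ (i,j)) = 0" by (rule FOG[OF ECar])
    hence "\<forall>i\<in>{..<q}. (\<Sum>j<k+1. E $$ (i,j) * E $$ (i,j)) = 0"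
      by (subst (asm) sum_nonneg_eq_0_iff) (auto intro!: sum_nonneg simp del: sum.lessThan_Suc)
    hence "\<forall>j\<in>{..<k+1}. E $$ (i,j) * E $$ (i,j) = 0" using ij
      by (subst (asm) sum_nonneg_eq_0_iff) auto
    thus ?thesis using ij by auto
  qed
  have mm: "(A * B) $$ (i,j) = (\<Sum>l<nk. A $$ (i,l) * B $$ (l,j))"
    if "A \<in> carrier_mat nr nk" "B \<in> carrier_mat nk nc" "i < nr" "j < nc"
    for A B :: "real mat" and nr nk nc i j
    using that by (auto simp: scalar_prod_def atLeast0LessThan intro!: sum.cong)
  define E0 where "E0 = mat q (k+1) (\<lambda>(i,j). \<Sum>t\<in>S. e t $ i * f t $ j)"
  have E0C: "E0 \<in> carrier_mat q (k+1)" unfolding E0_def by simp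
  have WE0: "W * E0 = 0\<^sub>m q (k+1)"
  proof (rule eq_matI)
    fix i j assume "i < dim_row (0\<^sub>m q (k+1) :: real mat)" "j < dim_col (0\<^sub>m q (k+1) :: real mat)"
    hence ij: "i < q" "j < k+1" by auto
    have "(W * E0) $$ (i,j) = (\<Sum>l<q. W $$ (i,l) * (\<Sum>t\<in>S. e t $ l * f t $ j))"
      using mm[OF Winv(1) E0C ij] ij by (simp add: E0_def)
    also have "\<dots> = (\<Sum>t\<in>S. (\<Sum>l<q. W $$ (i,l) * e t $ l) * f t $ j)"
      by (simp add: sum_distrib_left sum_distrib_right mult.assoc sum.swap[of _ S])
    also have "\<dots> = (\<Sum>t\<in>S. w t $ i * f t $ j)"
      unfolding w_def by (intro sum.cong refl) (simp add: mv[OF Winv(1) ecar] ij)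
    also have "\<dots> = E $$ (i,j)" unfolding E_def using ij by simp
    finally show "(W * E0) $$ (i,j) = 0\<^sub>m q (k+1) $$ (i,j)" using Ez[OF ij] ij by simp
  qed (use Winv E0C in auto)
  have E00: "E0 = 0\<^sub>m q (k+1)"
  proof -
    have "E0 = (Sig * W) * E0" using Winv E0C by simp
    also have "\<dots> = Sig * (W * E0)" by (rule assoc_mult_mat[OF SigC Winv(1) E0C])
    also have "\<dots> = 0\<^sub>m q (k+1)" unfolding WE0 using SigC by simp
    finally show ?thesis .
  qed
  have E0z: "(\<Sum>t\<in>S. e t $ i * f t $ j) = 0" if "i < q" "j < k+1" for i j
    using arg_cong[OF E00, of "\<lambda>M. M $$ (i,j)"] that unfolding E0_def by simp
  have reidx: "(\<Sum>t\<in>S. g t) = (\<Sum>r<n. g (c+k+1+r))" for g :: "nat \<Rightarrow> real"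
  proof -
    have "S = (\<lambda>r. c+k+1+r) ` {..<n}"
    proof
      show "S \<subseteq> (\<lambda>r. c+k+1+r) ` {..<n}"
      proof
        fix t assume "t \<in> S"
        hence t: "c+k+1 \<le> t" "t \<le> T - h" unfolding S_def window_def by auto
        hence "t = c+k+1+(t-(c+k+1))" "t-(c+k+1) < n" unfolding n_def nobs_def using T_big by auto
        thus "t \<in> (\<lambda>r. c+k+1+r) ` {..<n}" by blast
      qed
      show "(\<lambda>r. c+k+1+r) ` {..<n} \<subseteq> S"
        unfolding S_def window_def n_def nobs_def using T_big by auto
    qed
    thus ?thesis by (simp add: sum.reindex inj_on_def)
  qed
  define Fm where "Fm = Fmat z m c k h T \<beta>h"
  define Ym where "Ym = Ymat y q c k h T"
  have FmC: "Fm \<in> carrier_mat n (k+1)" unfolding Fm_def Fmat_def n_def by simp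
  have YmC: "Ym \<in> carrier_mat n q" unfolding Ym_def Ymat_def n_def by simp
  have Fm_ij: "Fm $$ (r,j) = f (c+k+1+r) $ j" if "r < n" "j < k+1" for r j
    using that unfolding Fm_def Fmat_def n_def f_def X_def by simp
  have Ym_ri: "Ym $$ (r,i) = y (c+k+1+r+h) $ i" if "r < n" "i < q" for r i
    using that unfolding Ym_def Ymat_def n_def by simp
  have FFC: "transpose_mat Fm * Fm \<in> carrier_mat (k+1) (k+1)" using FmC by simp
  have key: "\<Gamma>h * (transpose_mat Fm * Fm) = transpose_mat Ym * Fm"
  proof (rule eq_matI)
    fix i j assume "i < dim_row (transpose_mat Ym * Fm)" "j < dim_col (transpose_mat Ym * Fm)"
    hence ij: "i < q" "j < k+1" using YmC FmC by auto
    have "(\<Gamma>h * (transpose_mat Fm * Fm)) $$ (i,j)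
        = (\<Sum>l<k+1. \<Gamma>h $$ (i,l) * (\<Sum>r<n. Fm $$ (r,l) * Fm $$ (r,j)))"
      using mm[OF \<Gamma>h_dim FFC ij] mm[of "transpose_mat Fm" "k+1" n Fm "k+1"] FmC ij
      by (auto intro!: sum.cong)
    also have "\<dots> = (\<Sum>r<n. (\<Sum>l<k+1. \<Gamma>h $$ (i,l) * f (c+k+1+r) $ l) * f (c+k+1+r) $ j)"
      using ij by (simp add: Fm_ij sum_distrib_left sum_distrib_right mult.assoc sum.swap[of _ "{..<n}"] del: sum.lessThan_Suc)
    also have "\<dots> = (\<Sum>r<n. (\<Gamma>h *\<^sub>v f (c+k+1+r)) $ i * f (c+k+1+r) $ j)"
      by (intro sum.cong refl) (simp add: mv[OF \<Gamma>h_dim fcar] ij)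
    also have "\<dots> = (\<Sum>t\<in>S. (\<Gamma>h *\<^sub>v f t) $ i * f t $ j)" by (rule reidx[symmetric])
    also have "\<dots> = (\<Sum>t\<in>S. y (t+h) $ i * f t $ j)"
    proof -
      have "(\<Sum>t\<in>S. y (t+h) $ i * f t $ j) - (\<Sum>t\<in>S. (\<Gamma>h *\<^sub>v f t) $ i * f t $ j)
          = (\<Sum>t\<in>S. e t $ i * f t $ j)"
        unfolding sum_subtractf[symmetric]
        by (intro sum.cong refl) (simp add: e_def' f_def[symmetric] ij carrier_matD[OF \<Gamma>h_dim] left_diff_distrib)
      thus ?thesis using E0z[OF ij] by simp
    qed
    also have "\<dots> = (\<Sum>r<n. y (c+k+1+r+h) $ i * f (c+k+1+r) $ j)" by (rule reidx)
    also have "\<dots> = (transpose_mat Ym * Fm) $$ (i,j)"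
      using mm[of "transpose_mat Ym" q n Fm "k+1"] YmC FmC ij
      by (auto simp: Fm_ij Ym_ri intro!: sum.cong)
    finally show "(\<Gamma>h * (transpose_mat Fm * Fm)) $$ (i,j) = (transpose_mat Ym * Fm) $$ (i,j)" .
  qed (use \<Gamma>h_dim YmC FmC in auto)
  have Gpart: "\<Gamma>h = Gls y z q m c k h T \<beta>h"
  proof -
    have inv: "minv (transpose_mat Fm * Fm) \<in> carrier_mat (k+1) (k+1)"
      "(transpose_mat Fm * Fm) * minv (transpose_mat Fm * Fm) = 1\<^sub>m (k+1)"
      using minv_inv[OF FFC] FF_inv unfolding Fm_def by auto
    have "\<Gamma>h = \<Gamma>h * ((transpose_mat Fm * Fm) * minv (transpose_mat Fm * Fm))"
      using inv \<Gamma>h_dim by simp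
    also have "\<dots> = (\<Gamma>h * (transpose_mat Fm * Fm)) * minv (transpose_mat Fm * Fm)"
      using inv FFC \<Gamma>h_dim by (simp add: assoc_mult_mat)
    also have "\<dots> = transpose_mat Ym * Fm * minv (transpose_mat Fm * Fm)"
      by (simp only: key)
    also have "\<dots> = Gls y z q m c k h T \<beta>h"
      unfolding Gls_def Fm_def Ym_def ..
    finally show ?thesis .
  qed
  define g where "g t = transpose_mat (X t) *\<^sub>v (transpose_mat \<Gamma>h *\<^sub>v w t)" for t
  have XT: "transpose_mat (X t) \<in> carrier_mat p (k+1)" for t using X[of t] by simp
  have GT: "transpose_mat \<Gamma>h \<in> carrier_mat (k+1) q" using \<Gamma>h_dim by simp
  have gcar: "g t \<in> carrier_vec p" for t
    unfolding g_def by (meson XT GT wcar mult_mat_vec_carrier)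
  have FOB: "(\<Sum>t\<in>S. \<delta> \<bullet> g t) = 0" if dl: "\<delta> \<in> carrier_vec p" for \<delta>
  proof -
    have Xd: "X t *\<^sub>v \<delta> \<in> carrier_vec (k+1)" for t using X[of t] dl by (meson mult_mat_vec_carrier)
    have GXd: "\<Gamma>h *\<^sub>v (X t *\<^sub>v \<delta>) \<in> carrier_vec q" for t using Xd[of t] \<Gamma>h_dim by (meson mult_mat_vec_carrier)
    have Xb: "X t *\<^sub>v \<beta>h \<in> carrier_vec (k+1)" for t using X[of t] \<beta>h_dim unfolding p_def by (meson mult_mat_vec_carrier)
    have GXb: "\<Gamma>h *\<^sub>v (X t *\<^sub>v \<beta>h) \<in> carrier_vec q" for t using Xb[of t] \<Gamma>h_dim by (meson mult_mat_vec_carrier)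
    have "(\<Sum>t\<in>S. (\<Gamma>h *\<^sub>v (X t *\<^sub>v \<delta>)) \<bullet> w t) = 0"
      unfolding w_def
    proof (rule FO)
      show "\<Gamma>h *\<^sub>v (X t *\<^sub>v \<delta>) \<in> carrier_vec q" for t by (rule GXd)
      fix s
      show "\<exists>\<beta>\<in>carrier_vec p. \<exists>\<Gamma>\<in>carrier_mat q (k + 1).
                 \<forall>t\<in>S. err y z m c k h \<beta> \<Gamma> t = e t - s \<cdot>\<^sub>v (\<Gamma>h *\<^sub>v (X t *\<^sub>v \<delta>))"
      proof (intro bexI ballI)
        fix t assume t: "t \<in> S"
        have "X t *\<^sub>v (\<beta>h + s \<cdot>\<^sub>v \<delta>) = X t *\<^sub>v \<beta>h + s \<cdot>\<^sub>v (X t *\<^sub>v \<delta>)"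
          using X[of t] \<beta>h_dim dl unfolding p_def
          by (simp add: mult_add_distrib_mat_vec[of _ "k+1" "m * (c+1)"] mult_mat_vec[of _ "k+1" "m * (c+1)"])
        hence "\<Gamma>h *\<^sub>v (X t *\<^sub>v (\<beta>h + s \<cdot>\<^sub>v \<delta>)) = \<Gamma>h *\<^sub>v (X t *\<^sub>v \<beta>h) + s \<cdot>\<^sub>v (\<Gamma>h *\<^sub>v (X t *\<^sub>v \<delta>))"
          using \<Gamma>h_dim Xb Xd
          by (simp add: mult_add_distrib_mat_vec[of _ q "k+1"] mult_mat_vec[of _ q "k+1"])
        thus "err y z m c k h (\<beta>h + s \<cdot>\<^sub>v \<delta>) \<Gamma>h t = e t - s \<cdot>\<^sub>v (\<Gamma>h *\<^sub>v (X t *\<^sub>v \<delta>))"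
          unfolding err_def X_def[symmetric] e_def'
          using GXd[of t] GXb[of t] ycar[OF t]
          by (intro eq_vecI) auto
      qed (use \<beta>h_dim dl \<Gamma>h_dim in \<open>simp_all add: p_def\<close>)
    qed
    moreover have "(\<Gamma>h *\<^sub>v (X t *\<^sub>v \<delta>)) \<bullet> w t = \<delta> \<bullet> g t" for t
    proof -
      have "(\<Gamma>h *\<^sub>v (X t *\<^sub>v \<delta>)) \<bullet> w t = w t \<bullet> (\<Gamma>h *\<^sub>v (X t *\<^sub>v \<delta>))"
        by (rule comm_scalar_prod[OF GXd wcar])
      also have "\<dots> = (transpose_mat \<Gamma>h *\<^sub>v w t) \<bullet> (X t *\<^sub>v \<delta>)"
        by (rule transpose_vec_mult_scalar[OF \<Gamma>h_dim Xd wcar, symmetric])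
      also have "\<dots> = g t \<bullet> \<delta>"
        unfolding g_def by (rule transpose_vec_mult_scalar[OF X dl mult_mat_vec_carrier[OF GT wcar], symmetric])
      also have "\<dots> = \<delta> \<bullet> g t" by (rule comm_scalar_prod[OF gcar dl])
      finally show ?thesis .
    qed
    ultimately show ?thesis by simp
  qed
  define v where "v = vec p (\<lambda>l. \<Sum>t\<in>S. g t $ l)"
  have vC: "v \<in> carrier_vec p" unfolding v_def by simp
  have "(\<Sum>t\<in>S. v \<bullet> g t) = v \<bullet> v"
  proof -
    have "(\<Sum>t\<in>S. v \<bullet> g t) = (\<Sum>t\<in>S. \<Sum>l<p. v $ l * g t $ l)"
      by (intro sum.cong refl) (rule sp[OF vC gcar])
    also have "\<dots> = (\<Sum>l<p. v $ l * (\<Sum>t\<in>S. g t $ l))"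
      by (subst sum.swap) (simp add: sum_distrib_left)
    also have "\<dots> = (\<Sum>l<p. v $ l * v $ l)" by (intro sum.cong refl) (simp add: v_def)
    also have "\<dots> = v \<bullet> v" by (rule sp[OF vC vC, symmetric])
    finally show ?thesis .
  qed
  with FOB[OF vC] have "v \<bullet> v = 0" by simp
  hence v0: "v = 0\<^sub>v p" by (rule self_scalar_zero[OF vC])
  have bC: "\<beta>h \<in> carrier_vec p" unfolding p_def by (rule \<beta>h_dim)
  define Nt where "Nt t = transpose_mat (X t) * transpose_mat \<Gamma>h * W" for t
  define Mt where "Mt t = transpose_mat (X t) * transpose_mat \<Gamma>h * W * \<Gamma>h * X t" for t
  have NtC: "Nt t \<in> carrier_mat p q" for t unfolding Nt_def
    by (meson XT GT Winv(1) mult_carrier_mat)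
  have MtC: "Mt t \<in> carrier_mat p p" for t unfolding Mt_def
    by (meson XT GT Winv(1) \<Gamma>h_dim X mult_carrier_mat)
  have gt: "g t = Nt t *\<^sub>v y (t+h) - Mt t *\<^sub>v \<beta>h" if t: "t \<in> S" for t
  proof -
    have Xb: "X t *\<^sub>v \<beta>h \<in> carrier_vec (k+1)" using X[of t] \<beta>h_dim unfolding p_def by (meson mult_mat_vec_carrier)
    have GXb: "\<Gamma>h *\<^sub>v (X t *\<^sub>v \<beta>h) \<in> carrier_vec q" using Xb \<Gamma>h_dim by (meson mult_mat_vec_carrier)
    have "Mt t *\<^sub>v \<beta>h = (Nt t * \<Gamma>h) *\<^sub>v (X t *\<^sub>v \<beta>h)"
      unfolding Mt_def Nt_def[symmetric]
      by (rule assoc_mult_mat_vec[of _ p "k+1" _ p]) (use mult_carrier_mat[OF NtC \<Gamma>h_dim] X bC in auto)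
    also have "\<dots> = Nt t *\<^sub>v (\<Gamma>h *\<^sub>v (X t *\<^sub>v \<beta>h))"
      by (rule assoc_mult_mat_vec[OF NtC \<Gamma>h_dim Xb])
    finally have 1: "Mt t *\<^sub>v \<beta>h = Nt t *\<^sub>v (\<Gamma>h *\<^sub>v (X t *\<^sub>v \<beta>h))" .
    have "Nt t *\<^sub>v e t = Nt t *\<^sub>v y (t+h) - Nt t *\<^sub>v (\<Gamma>h *\<^sub>v (X t *\<^sub>v \<beta>h))"
      unfolding e_def' by (rule mult_minus_distrib_mat_vec[OF NtC ycar[OF t] GXb])
    moreover have "Nt t *\<^sub>v e t = g t"
    proof -
      have "Nt t *\<^sub>v e t = (transpose_mat (X t) * transpose_mat \<Gamma>h) *\<^sub>v (W *\<^sub>v e t)"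
        unfolding Nt_def using XT GT Winv(1) ecar[OF t] by (intro assoc_mult_mat_vec) auto
      also have "\<dots> = g t" unfolding g_def w_def
        by (rule assoc_mult_mat_vec[OF XT GT]) (use Winv(1) ecar[OF t] in auto)
      finally show ?thesis .
    qed
    ultimately show ?thesis using 1 by simp
  qed
  define Am where "Am = a \<cdot>\<^sub>m mat_sum p p Mt S"
  define bv where "bv = a \<cdot>\<^sub>v finsum_vec TYPE(real) p (\<lambda>t. Nt t *\<^sub>v y (t + h)) S"
  have AmC: "Am \<in> carrier_mat p p" unfolding Am_def mat_sum_def by simp
  have Nyc: "Nt t *\<^sub>v y (t + h) \<in> carrier_vec p" if "t \<in> S" for t
    using NtC ycar[OF that] by (meson mult_mat_vec_carrier)
  have bvC: "bv \<in> carrier_vec p" unfolding bv_def using finsum_vec_closed[of "\<lambda>t. Nt t *\<^sub>v y (t + h)" S p] Nyc by auto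
  have Ab: "Am *\<^sub>v \<beta>h = bv"
  proof (rule eq_vecI)
    fix l assume "l < dim_vec bv"
    hence l: "l < p" using bvC by simp
    have "(Am *\<^sub>v \<beta>h) $ l = (\<Sum>l'<p. Am $$ (l,l') * \<beta>h $ l')"
      using mv[OF AmC _ l] \<beta>h_dim p_def by simp
    also have "\<dots> = (\<Sum>l'<p. a * (\<Sum>t\<in>S. Mt t $$ (l,l')) * \<beta>h $ l')"
      using l by (intro sum.cong refl) (simp add: Am_def mat_sum_def)
    also have "\<dots> = a * (\<Sum>t\<in>S. \<Sum>l'<p. Mt t $$ (l,l') * \<beta>h $ l')"
      by (subst sum.swap) (simp add: sum_distrib_left sum_distrib_right mult.assoc)
    also have "\<dots> = a * (\<Sum>t\<in>S. (Mt t *\<^sub>v \<beta>h) $ l)"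
      using \<beta>h_dim p_def by (simp add: mv[OF MtC _ l])
    also have "\<dots> = a * (\<Sum>t\<in>S. (Nt t *\<^sub>v y (t + h)) $ l)"
    proof -
      have "0 = v $ l" using v0 l by simp
      also have "\<dots> = (\<Sum>t\<in>S. g t $ l)" unfolding v_def using l by simp
      also have "\<dots> = (\<Sum>t\<in>S. (Nt t *\<^sub>v y (t + h)) $ l - (Mt t *\<^sub>v \<beta>h) $ l)"
        by (intro sum.cong refl) (simp add: gt l carrier_matD[OF MtC])
      finally show ?thesis by (simp add: sum_subtractf)
    qed
    also have "\<dots> = bv $ l"
    proof -
      have fsC: "finsum_vec TYPE(real) p (\<lambda>t. Nt t *\<^sub>v y (t + h)) S \<in> carrier_vec p"
        using finsum_vec_closed[of "\<lambda>t. Nt t *\<^sub>v y (t + h)" S p] Nyc by auto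
      have "bv $ l = a * finsum_vec TYPE(real) p (\<lambda>t. Nt t *\<^sub>v y (t + h)) S $ l"
        unfolding bv_def using fsC l by simp
      also have "finsum_vec TYPE(real) p (\<lambda>t. Nt t *\<^sub>v y (t + h)) S $ l = (\<Sum>t\<in>S. (Nt t *\<^sub>v y (t + h)) $ l)"
        by (rule index_finsum_vec[OF S_fin l]) (use Nyc in auto)
      finally show ?thesis by simp
    qed
    finally show "(Am *\<^sub>v \<beta>h) $ l = bv $ l" .
  qed (use AmC bvC in auto)
  have Mt_eq: "Mt = (\<lambda>t. transpose_mat (Xmat z m c k t) * transpose_mat \<Gamma>h
                 * minv (resid_cov y z q m c k h T \<beta>h \<Gamma>h) * \<Gamma>h * Xmat z m c k t)"
    by (rule ext) (simp add: Mt_def X_def W_def Sig_def)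
  have Nt_eq: "Nt = (\<lambda>t. transpose_mat (Xmat z m c k t) * transpose_mat \<Gamma>h
                 * minv (resid_cov y z q m c k h T \<beta>h \<Gamma>h))"
    by (rule ext) (simp add: Nt_def X_def W_def Sig_def)
  have Am_inv: "invertible_mat Am"
    using A_inv unfolding Am_def Mt_eq a_def n_def p_def S_def .
  have Amin: "minv Am * Am = 1\<^sub>m p"
    using minv_inv[OF AmC Am_inv] by auto
  have Bpart: "\<beta>h = minv Am *\<^sub>v bv"
  proof -
    have "\<beta>h = (minv Am * Am) *\<^sub>v \<beta>h" using Amin \<beta>h_dim p_def by simp
    also have "\<dots> = minv Am *\<^sub>v (Am *\<^sub>v \<beta>h)"
      using minv_inv[OF AmC Am_inv] AmC bC
      by (intro assoc_mult_mat_vec[of _ p p]) auto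
    finally show ?thesis using Ab by simp
  qed
  show ?thesis
    using Bpart Gpart unfolding Am_def bv_def a_def n_def Mt_eq Nt_eq S_def p_def
    by simp
qed

end
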